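(* Let $G=(V,\mathcal E,w)$ be an undirected, connected, weighted graph on $n$ nodes with Laplacian $L$, and let $b>0$. Consider the delay-free second-order consensus network with dynamics noise $$\dot x(t)=v(t),\qquad \dot v(t)=-L\,x(t)-bL\,v(t)+\xi(t),\qquad y(t)=M_nx(t),$$ where $\xi_1,\dots,\xi_n$ are mutually independent zero-mean Gaussian white noises with intensities $\sigma_1^2,\dots,\sigma_n^2$. Then for every agent $i$ the centrality index is $$\eta_i=\frac1{2b}\Big[(L^2)^{\dagger}\Big]_{ii}.$$
   Context: Notation: - $M_n=I_n-\frac1n\mathbf1\mathbf1^T$. - $X^\dagger$ is the Moore–Penrose pseudo-inverse. The performance is $\rho_{ss}=\lim_{t\to\infty}\mathbb E[y^Ty]$. Equivalently, it is the squared $\mathcal H_2$ norm of the transfer matrix from $\xi$ to $y$, with noise intensities included as $\mathrm{diag}(\sigma_1,\dots,\sigma_n)$. The centrality index of agent $i$ is $\eta_i=\partial\rho_{ss}/\partial\sigma_i^2$. *)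

theory Defs
  imports "HOL-Analysis.Analysis"
begin

text \<open>Matrix power with respect to the matrix product (note: the library's ^ on vec is entrywise).\<close>
fun mpow :: "real^'n^'n \<Rightarrow> nat \<Rightarrow> real^'n^'n" where
  "mpow A 0 = mat 1"
| "mpow A (Suc k) = A ** mpow A k"

definition mexp :: "real^'n^'n \<Rightarrow> real^'n^'n" where
  "mexp A = (\<Sum>k. (1 / fact k) *\<^sub>R mpow A k)"

definition pinv :: "real^'n^'m \<Rightarrow> real^'m^'n" where
  "pinv X = (THE Y. X ** Y ** X = X \<and> Y ** X ** Y = Y \<and>
                   transpose (X ** Y) = X ** Y \<and> transpose (Y ** X) = Y ** X)"

definition diag_mat :: "real^'n \<Rightarrow> real^'n^'n" where
  "diag_mat s = (\<chi> i j. if i = j then s $ i else 0)"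

definition centering :: "real^'n^'n" where
  "centering = (\<chi> i j. (if i = j then 1 else 0) - 1 / real CARD('n))"

definition weighted_undirected_graph :: "('n \<Rightarrow> 'n \<Rightarrow> real) \<Rightarrow> bool" where
  "weighted_undirected_graph w \<longleftrightarrow>
     (\<forall>i j. w i j = w j i) \<and> (\<forall>i j. 0 \<le> w i j) \<and> (\<forall>i. w i i = 0)"

definition graph_connected :: "('n \<Rightarrow> 'n \<Rightarrow> real) \<Rightarrow> bool" where
  "graph_connected w \<longleftrightarrow> (\<forall>i j. (\<lambda>a c. 0 < w a c)\<^sup>*\<^sup>* i j)"

definition laplacian :: "('n::finite \<Rightarrow> 'n \<Rightarrow> real) \<Rightarrow> real^'n^'n" where
  "laplacian w = (\<chi> i j. if i = j then (\<Sum>k\<in>UNIV. w i k) else - w i j)"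

section \<open>Second-order consensus network, state (x, v) indexed by 'n + 'n (Inl = x, Inr = v)\<close>

definition so_A :: "real \<Rightarrow> real^'n^'n \<Rightarrow> real^('n + 'n)^('n + 'n)" where
  "so_A b L = (\<chi> r c. case (r, c) of
      (Inl i, Inl j) \<Rightarrow> 0
    | (Inl i, Inr j) \<Rightarrow> (if i = j then 1 else 0)
    | (Inr i, Inl j) \<Rightarrow> - (L $ i $ j)
    | (Inr i, Inr j) \<Rightarrow> - b * (L $ i $ j))"

definition so_B :: "real^'n \<Rightarrow> real^'n^('n + 'n)" where
  "so_B \<sigma> = (\<chi> r k. case r of Inl i \<Rightarrow> 0 | Inr i \<Rightarrow> (if i = k then \<sigma> $ k else 0))"

definition so_C :: "real^('n + 'n)^'n" where
  "so_C = (\<chi> i c. case c of Inl j \<Rightarrow> (centering :: real^'n^'n) $ i $ j | Inr j \<Rightarrow> 0)"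

text \<open>Steady-state performance = squared H2 norm of the transfer matrix from xi to y.\<close>
definition rho_ss :: "real \<Rightarrow> real^'n^'n \<Rightarrow> real^'n \<Rightarrow> real" where
  "rho_ss b L \<sigma> = integral {0..} (\<lambda>t.
     trace (so_C ** mexp (t *\<^sub>R so_A b L) ** so_B \<sigma> **
            transpose (so_C ** mexp (t *\<^sub>R so_A b L) ** so_B \<sigma>)))"

end

theory Submission
  imports Defs
begin


lemma sum_UNIV_Plus:
  "sum g (UNIV::('a::finite+'b::finite) set) = (\<Sum>a\<in>UNIV. g (Inl a)) + (\<Sum>b\<in>UNIV. g (Inr b))"
proof -
  have "sum g (UNIV <+> UNIV) = sum (g \<circ> Inl) (UNIV::'a set) + sum (g \<circ> Inr) (UNIV::'b set)"
    by (rule sum.Plus) auto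
  then show ?thesis by simp
qed

lemma inner_sym_mat:
  fixes A :: "real^'n^'n"
  assumes "transpose A = A"
  shows "x \<bullet> (A *v y) = (A *v x) \<bullet> y"
proof -
  have "x \<bullet> (A *v y) = (x v* A) \<bullet> y" by (simp add: dot_lmul_matrix)
  also have "x v* A = transpose A *v x" by simp
  finally show ?thesis using assms by simp
qed

lemma matrix_diff_ldistrib: "(A::real^'m^'n) ** (B - C) = A ** B - A ** C"
  by (simp add: matrix_matrix_mult_def vec_eq_iff sum_subtractf algebra_simps)
lemma matrix_diff_rdistrib: "((A::real^'m^'n) - B) ** C = A ** C - B ** C"
  by (simp add: matrix_matrix_mult_def vec_eq_iff sum_subtractf algebra_simps)
lemma matrix_add_rdistrib: "((A::real^'m^'n) + B) ** C = A ** C + B ** C"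
  by (simp add: matrix_matrix_mult_def vec_eq_iff sum.distrib algebra_simps)

definition Emat :: "real^'n^'n" where
  "Emat = (\<chi> i j. 1 / real CARD('n))"

lemma centering_eq: "centering = mat 1 - Emat"
  by (simp add: centering_def Emat_def mat_def vec_eq_iff)

lemma Emat_idem: "Emat ** Emat = (Emat :: real^'n::finite^'n)"
  by (simp add: Emat_def matrix_matrix_mult_def vec_eq_iff power2_eq_square)

lemma Emat_sym: "transpose (Emat::real^'n^'n) = Emat"
  by (simp add: Emat_def transpose_def vec_eq_iff)

lemma centering_sym: "transpose (centering::real^'n^'n) = centering"
  by (simp add: centering_def transpose_def vec_eq_iff)

lemma Emat_quad: "x \<bullet> ((Emat::real^'n^'n) *v x) = (sum (\<lambda>i. x $ i) UNIV)^2 / real CARD('n)"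
  apply (simp add: Emat_def inner_vec_def matrix_vector_mult_def power2_eq_square
      sum_distrib_left sum_distrib_right sum_divide_distrib)
  apply (subst sum.swap)
  apply (simp add: mult.commute)
  done

context
  fixes w :: "'n::finite \<Rightarrow> 'n \<Rightarrow> real"
  assumes wug: "weighted_undirected_graph w"
begin

lemma w_sym: "w i j = w j i" using wug by (simp add: weighted_undirected_graph_def)
lemma w_nonneg: "0 \<le> w i j" using wug by (simp add: weighted_undirected_graph_def)
lemma w_diag: "w i i = 0" using wug by (simp add: weighted_undirected_graph_def)

lemma L_entry: "laplacian w $ i $ j = (if i = j then (\<Sum>k\<in>UNIV. w i k) else 0) - w i j"
  by (simp add: laplacian_def w_diag)

lemma L_sym: "transpose (laplacian w) = laplacian w"
  by (simp add: transpose_def vec_eq_iff laplacian_def w_sym)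

lemma L_rowsum: "(\<Sum>j\<in>UNIV. laplacian w $ i $ j) = 0"
  by (simp add: L_entry sum_subtractf)

lemma L_colsum: "(\<Sum>i\<in>UNIV. laplacian w $ i $ j) = 0"
proof -
  have "(\<Sum>i\<in>UNIV. laplacian w $ i $ j) = (\<Sum>i\<in>UNIV. laplacian w $ j $ i)"
    using L_sym by (metis (no_types, lifting) sum.cong transpose_def vec_lambda_beta)
  then show ?thesis using L_rowsum by simp
qed

lemma L_Emat: "laplacian w ** Emat = 0"
proof -
  have "(\<Sum>k\<in>UNIV. laplacian w $ i $ k * (1 / real CARD('n))) = 0" for i
    by (simp only: sum_distrib_right[symmetric] L_rowsum mult_zero_left)
  then show ?thesis by (simp add: Emat_def matrix_matrix_mult_def vec_eq_iff)
qed

lemma Emat_L: "Emat ** laplacian w = 0"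
proof -
  have "(\<Sum>k\<in>UNIV. (1 / real CARD('n)) * laplacian w $ k $ j) = 0" for j
    by (simp only: sum_distrib_left[symmetric] L_colsum mult_zero_right)
  then show ?thesis by (simp add: Emat_def matrix_matrix_mult_def vec_eq_iff)
qed

lemma L_row: "(\<Sum>j\<in>UNIV. laplacian w $ i $ j * x$j) = (\<Sum>j\<in>UNIV. w i j) * x$i - (\<Sum>j\<in>UNIV. w i j * x$j)"
proof -
  have "(\<lambda>j. laplacian w $ i $ j * x$j) = (\<lambda>j. (if i = j then (\<Sum>k\<in>UNIV. w i k) * x$j else 0) - w i j * x$j)"
    by (auto simp: L_entry fun_eq_iff left_diff_distrib)
  then have "(\<Sum>j\<in>UNIV. laplacian w $ i $ j * x$j) = (\<Sum>j\<in>UNIV. (if i = j then (\<Sum>k\<in>UNIV. w i k) * x$j else 0) - w i j * x$j)"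
    by (simp only:)
  also have "\<dots> = (\<Sum>j\<in>UNIV. w i j) * x$i - (\<Sum>j\<in>UNIV. w i j * x$j)"
    by (simp only: sum_subtractf sum.delta sum.delta' finite UNIV_I if_True)
  finally show ?thesis .
qed

lemma L_quad: "x \<bullet> (laplacian w *v x) = (\<Sum>i\<in>UNIV. \<Sum>j\<in>UNIV. w i j * (x$i - x$j)^2) / 2"
proof -
  define T1 where "T1 = (\<Sum>i\<in>UNIV. \<Sum>j\<in>UNIV. w i j * (x$i)^2)"
  define T2 where "T2 = (\<Sum>i\<in>UNIV. \<Sum>j\<in>UNIV. w i j * x$i * x$j)"
  have S: "(\<Sum>i\<in>UNIV. \<Sum>j\<in>UNIV. w i j * (x$j)^2) = T1"
    unfolding T1_def by (subst sum.swap) (simp add: w_sym)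
  have "x \<bullet> (laplacian w *v x) = (\<Sum>i\<in>UNIV. x$i * (\<Sum>j\<in>UNIV. laplacian w $ i $ j * x$j))"
    by (simp add: inner_vec_def matrix_vector_mult_def)
  also have "\<dots> = (\<Sum>i\<in>UNIV. x$i * ((\<Sum>j\<in>UNIV. w i j) * x$i - (\<Sum>j\<in>UNIV. w i j * x$j)))"
    by (simp add: L_row)
  also have "\<dots> = T1 - T2"
  proof -
    have e: "x$i * ((\<Sum>j\<in>UNIV. w i j) * x$i - (\<Sum>j\<in>UNIV. w i j * x$j)) =
       (\<Sum>j\<in>UNIV. w i j * (x$i)^2) - (\<Sum>j\<in>UNIV. w i j * x$i * x$j)" for i
      by (simp add: right_diff_distrib sum_distrib_left sum_distrib_right power2_eq_square mult_ac)
    show ?thesis unfolding T1_def T2_def e by (simp only: sum_subtractf)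
  qed
  also have "\<dots> = (\<Sum>i\<in>UNIV. \<Sum>j\<in>UNIV. w i j * (x$i - x$j)^2) / 2"
  proof -
    have e: "w i j * (x$i - x$j)^2 = (w i j * (x$i)^2 - w i j * x$i * x$j) + (w i j * (x$j)^2 - w i j * x$i * x$j)" for i j
      by (simp add: power2_eq_square algebra_simps)
    have "(\<Sum>i\<in>UNIV. \<Sum>j\<in>UNIV. w i j * (x$i - x$j)^2) =
       (\<Sum>i\<in>UNIV. \<Sum>j\<in>UNIV. w i j * (x$i)^2 - w i j * x$i * x$j) + (\<Sum>i\<in>UNIV. \<Sum>j\<in>UNIV. w i j * (x$j)^2 - w i j * x$i * x$j)"
      unfolding e by (simp only: sum.distrib)
    also have "\<dots> = (T1 - T2) + (T1 - T2)"
      by (simp only: sum_subtractf S flip: T1_def T2_def)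
    finally show ?thesis by simp
  qed
  finally show ?thesis .
qed

lemma L_psd: "0 \<le> x \<bullet> (laplacian w *v x)"
  unfolding L_quad by (intro divide_nonneg_pos sum_nonneg mult_nonneg_nonneg w_nonneg) auto

lemma L_ker:
  assumes conn: "graph_connected w" and q: "x \<bullet> (laplacian w *v x) = 0"
  shows "x $ i = x $ j"
proof -
  have z: "w a c * (x$a - x$c)^2 = 0" for a c
  proof -
    have "(\<Sum>i\<in>UNIV. \<Sum>j\<in>UNIV. w i j * (x$i - x$j)^2) = 0" using q by (simp add: L_quad)
    then have "\<forall>i\<in>UNIV. (\<Sum>j\<in>UNIV. w i j * (x$i - x$j)^2) = 0"
      by (subst (asm) sum_nonneg_eq_0_iff) (auto intro!: sum_nonneg simp: w_nonneg)
    then have "(\<Sum>j\<in>UNIV. w a j * (x$a - x$j)^2) = 0" by auto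
    then show ?thesis by (subst (asm) sum_nonneg_eq_0_iff) (auto simp: w_nonneg)
  qed
  have "(\<lambda>a c. 0 < w a c)\<^sup>*\<^sup>* i j" using conn by (simp add: graph_connected_def)
  then show ?thesis
  proof (induction rule: rtranclp_induct)
    case base then show ?case by simp
  next
    case (step y z')
    with z[of y z'] show ?case by simp
  qed
qed

end


lemma transpose_add: "transpose ((A::real^'m^'n) + B) = transpose A + transpose B"
  by (simp add: transpose_def vec_eq_iff)
lemma transpose_diff: "transpose ((A::real^'m^'n) - B) = transpose A - transpose B"
  by (simp add: transpose_def vec_eq_iff)

lemma pinv_unique:
  fixes X :: "real^'n^'m" and Y :: "real^'m^'n"
  assumes h1: "X ** Y ** X = X" and h2: "Y ** X ** Y = Y"
    and h3: "transpose (X ** Y) = X ** Y" and h4: "transpose (Y ** X) = Y ** X"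
  shows "pinv X = Y"
  unfolding pinv_def
proof (rule the_equality)
  show "X ** Y ** X = X \<and> Y ** X ** Y = Y \<and> transpose (X ** Y) = X ** Y \<and> transpose (Y ** X) = Y ** X"
    using assms by blast
next
  fix Z assume "X ** Z ** X = X \<and> Z ** X ** Z = Z \<and> transpose (X ** Z) = X ** Z \<and> transpose (Z ** X) = Z ** X"
  then have g1: "X ** Z ** X = X" and g2: "Z ** X ** Z = Z"
    and g3: "transpose (X ** Z) = X ** Z" and g4: "transpose (Z ** X) = Z ** X" by auto
  have tX: "transpose X = transpose X ** transpose Z ** transpose X"
  proof -
    have "transpose X = transpose (X ** Z ** X)" using g1 by simp
    also have "\<dots> = transpose X ** transpose Z ** transpose X"
      by (simp add: matrix_transpose_mul matrix_mul_assoc)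
    finally show ?thesis .
  qed
  have tX': "transpose X = transpose X ** transpose Y ** transpose X"
  proof -
    have "transpose X = transpose (X ** Y ** X)" using h1 by simp
    also have "\<dots> = transpose X ** transpose Y ** transpose X"
      by (simp add: matrix_transpose_mul matrix_mul_assoc)
    finally show ?thesis .
  qed
  have eY: "Y = Y ** X ** Z"
  proof -
    have "Y = Y ** (X ** Y)" using h2 by (simp add: matrix_mul_assoc)
    also have "\<dots> = Y ** transpose (X ** Y)" using h3 by simp
    also have "\<dots> = Y ** transpose Y ** transpose X" by (simp add: matrix_transpose_mul matrix_mul_assoc)
    also have "\<dots> = Y ** transpose Y ** (transpose X ** transpose Z ** transpose X)"
      using tX by simp
    also have "\<dots> = Y ** transpose (X ** Y) ** transpose (X ** Z)"
      by (simp add: matrix_transpose_mul matrix_mul_assoc)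
    also have "\<dots> = Y ** (X ** Y) ** (X ** Z)" using h3 g3 by simp
    also have "\<dots> = (Y ** X ** Y) ** X ** Z" by (simp add: matrix_mul_assoc)
    also have "\<dots> = Y ** X ** Z" using h2 by simp
    finally show ?thesis .
  qed
  have eZ: "Z = Y ** X ** Z"
  proof -
    have "Z = (Z ** X) ** Z" using g2 by simp
    also have "\<dots> = transpose (Z ** X) ** Z" using g4 by simp
    also have "\<dots> = transpose X ** transpose Z ** Z" by (simp add: matrix_transpose_mul)
    also have "\<dots> = (transpose X ** transpose Y ** transpose X) ** transpose Z ** Z"
      using tX' by simp
    also have "\<dots> = transpose (Y ** X) ** transpose (Z ** X) ** Z"
      by (simp add: matrix_transpose_mul matrix_mul_assoc)
    also have "\<dots> = (Y ** X) ** (Z ** X) ** Z" using h4 g4 by simp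
    also have "\<dots> = Y ** X ** (Z ** X ** Z)" by (simp add: matrix_mul_assoc)
    also have "\<dots> = Y ** X ** Z" using g2 by simp
    finally show ?thesis .
  qed
  show "Z = Y" using eY eZ by simp
qed

definition Kmat :: "('n::finite \<Rightarrow> 'n \<Rightarrow> real) \<Rightarrow> real^'n^'n" where
  "Kmat w = laplacian w + Emat"
definition Kinv :: "('n::finite \<Rightarrow> 'n \<Rightarrow> real) \<Rightarrow> real^'n^'n" where
  "Kinv w = (SOME B. B ** Kmat w = mat 1)"
definition Lp :: "('n::finite \<Rightarrow> 'n \<Rightarrow> real) \<Rightarrow> real^'n^'n" where
  "Lp w = Kinv w - Emat"

context
  fixes w :: "'n::finite \<Rightarrow> 'n \<Rightarrow> real"
  assumes wug: "weighted_undirected_graph w" and conn: "graph_connected w"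
begin

lemma K_inj: assumes "Kmat w *v x = 0" shows "x = 0"
proof -
  have "x \<bullet> (Kmat w *v x) = 0" using assms by simp
  then have s: "x \<bullet> (laplacian w *v x) + (sum (\<lambda>i. x $ i) UNIV)^2 / real CARD('n) = 0"
    by (simp add: Kmat_def matrix_vector_mult_add_rdistrib inner_add_right Emat_quad)
  have a: "0 \<le> x \<bullet> (laplacian w *v x)" using L_psd[OF wug] .
  have b: "0 \<le> (sum (\<lambda>i. x $ i) UNIV)^2 / real CARD('n)" by simp
  have q: "x \<bullet> (laplacian w *v x) = 0" using s a b by linarith
  have "(sum (\<lambda>i. x $ i) UNIV)^2 / real CARD('n) = 0" using s a b by linarith
  then have s0: "sum (\<lambda>i. x $ i) UNIV = 0" by simp
  have c: "x $ i = x $ j" for i j using L_ker[OF wug conn q] .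
  show "x = 0"
    unfolding vec_eq_iff
  proof (intro allI)
    fix i
    have "sum (\<lambda>j. x $ j) UNIV = sum (\<lambda>j. x $ i) (UNIV::'n set)" by (rule sum.cong[OF refl]) (rule c)
    then have "real CARD('n) * x $ i = 0" using s0 by simp
    then show "x $ i = 0 $ i" by simp
  qed
qed

lemma Kinv_left: "Kinv w ** Kmat w = mat 1"
proof -
  have "\<exists>B. B ** Kmat w = mat 1"
    using K_inj by (subst matrix_left_invertible_ker) blast
  then show ?thesis unfolding Kinv_def by (rule someI_ex)
qed

lemma Kinv_right: "Kmat w ** Kinv w = mat 1"
  using Kinv_left matrix_left_right_inverse by blast

lemma K_sym: "transpose (Kmat w) = Kmat w"
  by (simp add: Kmat_def transpose_add L_sym[OF wug] Emat_sym)

lemma K_E: "Kmat w ** Emat = Emat"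
  by (simp add: Kmat_def matrix_add_rdistrib L_Emat[OF wug] Emat_idem)
lemma E_K: "Emat ** Kmat w = Emat"
  by (simp add: Kmat_def matrix_add_ldistrib Emat_L[OF wug] Emat_idem)

lemma Kinv_E: "Kinv w ** Emat = Emat"
proof -
  have "Kinv w ** (Kmat w ** Emat) = Kinv w ** Emat" by (simp add: K_E)
  then show ?thesis by (simp add: matrix_mul_assoc Kinv_left)
qed
lemma E_Kinv: "Emat ** Kinv w = Emat"
proof -
  have "(Emat ** Kmat w) ** Kinv w = Emat ** Kinv w" by (simp add: E_K)
  then show ?thesis by (simp add: matrix_mul_assoc[symmetric] Kinv_right)
qed

lemma Kinv_sym: "transpose (Kinv w) = Kinv w"
proof -
  have a: "transpose (Kinv w) ** Kmat w = mat 1"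
    using arg_cong[OF Kinv_right, of transpose] by (simp add: matrix_transpose_mul K_sym)
  have "transpose (Kinv w) = transpose (Kinv w) ** (Kmat w ** Kinv w)" by (simp add: Kinv_right)
  also have "\<dots> = Kinv w" by (simp add: matrix_mul_assoc a)
  finally show ?thesis .
qed

lemma L_eq: "laplacian w = Kmat w - Emat" by (simp add: Kmat_def)

lemma Lp_sym: "transpose (Lp w) = Lp w"
  by (simp add: Lp_def transpose_diff Kinv_sym Emat_sym)

lemma L_Lp: "laplacian w ** Lp w = centering"
  by (simp add: L_eq Lp_def matrix_diff_ldistrib matrix_diff_rdistrib Kinv_right K_E E_Kinv Emat_idem centering_eq)
lemma Lp_L: "Lp w ** laplacian w = centering"
  by (simp add: L_eq Lp_def matrix_diff_ldistrib matrix_diff_rdistrib Kinv_left Kinv_E E_K Emat_idem centering_eq)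
lemma M_Lp: "centering ** Lp w = Lp w"
  by (simp add: Lp_def matrix_diff_ldistrib matrix_diff_rdistrib E_Kinv Emat_idem centering_eq)
lemma Lp_M: "Lp w ** centering = Lp w"
  by (simp add: Lp_def matrix_diff_ldistrib matrix_diff_rdistrib Kinv_E Emat_idem centering_eq)
lemma L_M: "laplacian w ** centering = laplacian w"
  by (simp add: matrix_diff_ldistrib L_Emat[OF wug] centering_eq)
lemma M_L: "centering ** laplacian w = laplacian w"
  by (simp add: matrix_diff_rdistrib Emat_L[OF wug] centering_eq)
lemma M_M: "centering ** centering = (centering :: real^'n^'n)"
  by (simp add: matrix_diff_rdistrib matrix_diff_ldistrib Emat_idem centering_eq)

lemma pinv_L2: "pinv (laplacian w ** laplacian w) = Lp w ** Lp w"
proof -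
  let ?L = "laplacian w" and ?P = "Lp w" and ?M = "centering :: real^'n^'n"
  have XY: "?L ** ?L ** (?P ** ?P) = ?M"
  proof -
    have "?L ** ?L ** (?P ** ?P) = ?L ** ((?L ** ?P) ** ?P)" by (simp add: matrix_mul_assoc)
    also have "\<dots> = ?M" by (simp add: L_Lp M_Lp)
    finally show ?thesis .
  qed
  have YX: "?P ** ?P ** (?L ** ?L) = ?M"
  proof -
    have "?P ** ?P ** (?L ** ?L) = ?P ** ((?P ** ?L) ** ?L)" by (simp add: matrix_mul_assoc)
    also have "\<dots> = ?M" by (simp add: Lp_L M_L)
    finally show ?thesis .
  qed
  show ?thesis
  proof (rule pinv_unique)
    show "?L ** ?L ** (?P ** ?P) ** (?L ** ?L) = ?L ** ?L"
      by (simp only: XY) (simp add: matrix_mul_assoc M_L)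
    show "?P ** ?P ** (?L ** ?L) ** (?P ** ?P) = ?P ** ?P"
      by (simp only: YX) (simp add: matrix_mul_assoc M_Lp)
    show "transpose (?L ** ?L ** (?P ** ?P)) = ?L ** ?L ** (?P ** ?P)"
      by (simp only: XY centering_sym)
    show "transpose (?P ** ?P ** (?L ** ?L)) = ?P ** ?P ** (?L ** ?L)"
      by (simp only: YX centering_sym)
  qed
qed

end


lemma norm_mat_le: "norm (X::real^'m^'k) \<le> (\<Sum>r\<in>UNIV. \<Sum>c\<in>UNIV. \<bar>X$r$c\<bar>)"
proof -
  have "norm X \<le> (\<Sum>r\<in>UNIV. norm (X$r))"
    unfolding norm_vec_def by (rule L2_set_le_sum) simp
  also have "\<dots> \<le> (\<Sum>r\<in>UNIV. \<Sum>c\<in>UNIV. \<bar>X$r$c\<bar>)"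
    by (intro sum_mono norm_le_l1_cart)
  finally show ?thesis .
qed

lemma mpow_scale: "mpow (t *\<^sub>R A) k = (t^k) *\<^sub>R mpow A k"
  by (induction k) (simp_all add: matrix_scalar_ac scalar_matrix_assoc[symmetric])

context
  fixes A :: "real^'m::finite^'m"
begin

definition "mb = real CARD('m) * (\<Sum>r\<in>UNIV. \<Sum>c\<in>UNIV. \<bar>A$r$c\<bar>)"

lemma mb_nonneg: "0 \<le> mb" unfolding mb_def by (intro mult_nonneg_nonneg sum_nonneg) auto

lemma mpow_entry_bound: "\<bar>mpow A k $ r $ c\<bar> \<le> mb ^ k"
proof (induction k arbitrary: r c)
  case 0
  then show ?case by (simp add: mat_def)
next
  case (Suc k)
  have entry: "\<bar>A$r$j\<bar> \<le> (\<Sum>r\<in>UNIV. \<Sum>c\<in>UNIV. \<bar>A$r$c\<bar>)" for r j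
  proof -
    have "\<bar>A$r$j\<bar> \<le> (\<Sum>c\<in>UNIV. \<bar>A$r$c\<bar>)" by (rule member_le_sum) auto
    also have "\<dots> \<le> (\<Sum>r\<in>UNIV. \<Sum>c\<in>UNIV. \<bar>A$r$c\<bar>)"
      by (rule member_le_sum[where f = "\<lambda>r. \<Sum>c\<in>UNIV. \<bar>A$r$c\<bar>"]) (auto intro: sum_nonneg)
    finally show ?thesis .
  qed
  have "\<bar>mpow A (Suc k) $ r $ c\<bar> = \<bar>\<Sum>j\<in>UNIV. A$r$j * mpow A k $ j $ c\<bar>"
    by (simp add: matrix_matrix_mult_def)
  also have "\<dots> \<le> (\<Sum>j\<in>UNIV. \<bar>A$r$j\<bar> * \<bar>mpow A k $ j $ c\<bar>)"
    by (rule order_trans[OF sum_abs]) (simp add: abs_mult)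
  also have "\<dots> \<le> (\<Sum>j\<in>(UNIV::'m set). (\<Sum>r\<in>UNIV. \<Sum>c\<in>UNIV. \<bar>A$r$c\<bar>) * mb ^ k)"
    by (rule sum_mono, rule mult_mono[OF entry Suc.IH]) (auto intro: sum_nonneg)
  also have "\<dots> = mb ^ Suc k" by (simp add: mb_def)
  finally show ?case .
qed

lemma mexp_terms_bound:
  "norm ((1 / fact k) *\<^sub>R mpow (t *\<^sub>R A) k) \<le> real CARD('m)^2 * (inverse (fact k) * (\<bar>t\<bar> * mb)^k)"
proof -
  have "norm ((1 / fact k) *\<^sub>R mpow (t *\<^sub>R A) k) = (\<bar>t\<bar>^k / fact k) * norm (mpow A k)"
    by (simp add: mpow_scale power_abs)
  also have "\<dots> \<le> (\<bar>t\<bar>^k / fact k) * (\<Sum>r\<in>(UNIV::'m set). \<Sum>c\<in>(UNIV::'m set). mb ^ k)"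
    by (intro mult_left_mono order_trans[OF norm_mat_le] sum_mono mpow_entry_bound) auto
  also have "\<dots> = real CARD('m)^2 * (inverse (fact k) * (\<bar>t\<bar> * mb)^k)"
    by (simp add: power2_eq_square power_mult_distrib field_simps)
  finally show ?thesis .
qed

lemma mexp_summable: "summable (\<lambda>k. (1 / fact k) *\<^sub>R mpow (t *\<^sub>R A) k)"
proof (rule summable_comparison_test)
  show "\<exists>N. \<forall>n\<ge>N. norm ((1 / fact n) *\<^sub>R mpow (t *\<^sub>R A) n) \<le> real CARD('m)^2 * (inverse (fact n) * (\<bar>t\<bar> * mb)^n)"
    using mexp_terms_bound by blast
  show "summable (\<lambda>n. real CARD('m)^2 * (inverse (fact n) * (\<bar>t\<bar> * mb)^n))"
    by (intro summable_mult summable_exp)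
qed

definition "cf r c k = mpow A k $ r $ c / fact k"

lemma cf_summable: "summable (\<lambda>k. cf r c k * K^k)"
proof (rule summable_comparison_test)
  show "\<exists>N. \<forall>n\<ge>N. norm (cf r c n * K^n) \<le> inverse (fact n) * (\<bar>K\<bar> * mb)^n"
  proof (intro exI allI impI)
    fix n :: nat
    have "norm (cf r c n * K^n) = \<bar>mpow A n $ r $ c\<bar> * \<bar>K\<bar>^n / fact n"
      by (simp add: cf_def abs_mult power_abs)
    also have "\<dots> \<le> mb^n * \<bar>K\<bar>^n / fact n"
      by (intro divide_right_mono mult_right_mono mpow_entry_bound) auto
    also have "\<dots> = inverse (fact n) * (\<bar>K\<bar> * mb)^n"
      by (simp add: power_mult_distrib field_simps)
    finally show "norm (cf r c n * K^n) \<le> inverse (fact n) * (\<bar>K\<bar> * mb)^n" .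
  qed
  show "summable (\<lambda>n. inverse (fact n) * (\<bar>K\<bar> * mb)^n)" by (rule summable_exp)
qed

lemma mexp_entry: "mexp (t *\<^sub>R A) $ r $ c = (\<Sum>k. cf r c k * t^k)"
proof -
  have "mexp (t *\<^sub>R A) $ r $ c = (\<Sum>k. ((1 / fact k) *\<^sub>R mpow (t *\<^sub>R A) k) $ r $ c)"
    unfolding mexp_def
    by (rule bounded_linear.suminf[OF bounded_linear_compose[OF bounded_linear_vec_nth bounded_linear_vec_nth] mexp_summable])
  also have "\<dots> = (\<Sum>k. cf r c k * t^k)"
    by (intro suminf_cong) (simp add: mpow_scale cf_def)
  finally show ?thesis .
qed

lemma mexp_entry_deriv:
  "((\<lambda>t. mexp (t *\<^sub>R A) $ r $ c) has_real_derivative (A ** mexp (t *\<^sub>R A)) $ r $ c) (at t)"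
proof -
  have f: "(\<lambda>t. mexp (t *\<^sub>R A) $ r $ c) = (\<lambda>t. \<Sum>k. cf r c k * t^k)"
    by (simp add: mexp_entry)
  have d: "DERIV (\<lambda>t. \<Sum>k. cf r c k * t^k) t :> (\<Sum>k. diffs (cf r c) k * t^k)"
    by (rule termdiffs_strong[OF cf_summable[where K = "\<bar>t\<bar> + 1"]]) simp
  have "(\<Sum>k. diffs (cf r c) k * t^k) = (\<Sum>k. \<Sum>j\<in>UNIV. A$r$j * (cf j c k * t^k))"
  proof (rule suminf_cong)
    fix k
    have "diffs (cf r c) k * t^k = mpow A (Suc k) $ r $ c / fact k * t^k"
      by (simp add: diffs_def cf_def field_simps del: of_nat_Suc)
    also have "\<dots> = (\<Sum>j\<in>UNIV. A$r$j * (cf j c k * t^k))"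
      by (simp add: matrix_matrix_mult_def cf_def sum_distrib_left sum_divide_distrib mult_ac)
    finally show "diffs (cf r c) k * t^k = (\<Sum>j\<in>UNIV. A$r$j * (cf j c k * t^k))" .
  qed
  also have "\<dots> = (\<Sum>j\<in>UNIV. \<Sum>k. A$r$j * (cf j c k * t^k))"
    by (rule suminf_sum) (intro summable_mult cf_summable)
  also have "\<dots> = (\<Sum>j\<in>UNIV. A$r$j * mexp (t *\<^sub>R A) $ j $ c)"
    by (intro sum.cong refl) (simp add: suminf_mult cf_summable mexp_entry)
  also have "\<dots> = (A ** mexp (t *\<^sub>R A)) $ r $ c"
    by (simp add: matrix_matrix_mult_def)
  finally show ?thesis using d f by simp
qed

lemma mexp_zero_entry: "mexp (0 *\<^sub>R A) $ r $ c = mat 1 $ r $ c"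
proof -
  have "mexp (0 *\<^sub>R A) $ r $ c = (\<Sum>k. cf r c k * 0^k)" by (rule mexp_entry)
  also have "\<dots> = cf r c 0" by (rule powser_zero)
  finally show ?thesis by (simp add: cf_def)
qed

end


lemma inner_sym_mat':
  fixes A :: "real^'n^'n"
  assumes "transpose A = A"
  shows "x \<bullet> (A *v y) = (A *v x) \<bullet> y"
proof -
  have "x \<bullet> (A *v y) = (x v* A) \<bullet> y" by (simp add: dot_lmul_matrix)
  also have "x v* A = transpose A *v x" by simp
  finally show ?thesis using assms by simp
qed

lemma mv_minus: "(A::real^'n^'m) *v (- x) = - (A *v x)"
  by (simp add: matrix_vector_mult_def vec_eq_iff sum_negf)

lemma vd_inner:
  "(f has_vector_derivative f') (at x) \<Longrightarrow> (g has_vector_derivative g') (at x) \<Longrightarrow>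
   ((\<lambda>x. f x \<bullet> g x) has_vector_derivative (f x \<bullet> g' + f' \<bullet> g x)) (at x)"
  by (rule bounded_bilinear.has_vector_derivative[OF bounded_bilinear_inner])

lemma vd_mat:
  "(f has_vector_derivative f') F \<Longrightarrow> ((\<lambda>x. (A::real^'n^'m) *v f x) has_vector_derivative (A *v f')) F"
  by (rule bounded_linear.has_vector_derivative[OF matrix_vector_mul_bounded_linear])

lemma vd_scale:
  "(f has_vector_derivative f') F \<Longrightarrow> ((\<lambda>x. c *\<^sub>R f x) has_vector_derivative (c *\<^sub>R f')) F"
  by (rule bounded_linear.has_vector_derivative[OF bounded_linear_scaleR_right])

lemma vd_rscale:
  "(f has_vector_derivative f') F \<Longrightarrow> ((\<lambda>x. c * (f x::real)) has_vector_derivative (c * f')) F"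
  using vd_scale[of f f' F c] by simp

definition Wf :: "real^'n^'n \<Rightarrow> real \<Rightarrow> real^'n \<Rightarrow> real^'n \<Rightarrow> real" where
  "Wf P b x v = (1/(2*b)) * ((P *v v + b *\<^sub>R x) \<bullet> (P *v v + b *\<^sub>R x)) + (1/(2*b)) * (x \<bullet> (P *v x))"

definition Gf :: "real^'n^'n \<Rightarrow> real^'n^'n \<Rightarrow> real \<Rightarrow> real \<Rightarrow> real^'n \<Rightarrow> real^'n \<Rightarrow> real" where
  "Gf L P b \<alpha> x v = \<alpha> * Wf P b x v - x \<bullet> v - (b/2) * (x \<bullet> (L *v x))"

context
  fixes L P M :: "real^'n::finite^'n" and b :: real and p q :: "real \<Rightarrow> real^'n"
  assumes Lsym: "transpose L = L" and Psym: "transpose P = P"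
   and LP: "L ** P = M" and PL: "P ** L = M" and MP: "M ** P = P"
   and Lpsd: "\<And>x. 0 \<le> x \<bullet> (L *v x)"
   and bpos: "0 < b"
   and dp: "\<And>t. (p has_vector_derivative q t) (at t)"
   and dq: "\<And>t. (q has_vector_derivative (-(L *v p t) - b *\<^sub>R (L *v q t))) (at t)"
   and Mp: "\<And>t. M *v p t = p t" and Mq: "\<And>t. M *v q t = q t"
begin

lemma P_psd: "0 \<le> x \<bullet> (P *v x)"
proof -
  have "P *v (L *v (P *v x)) = (P ** L) *v (P *v x)" by (simp only: matrix_vector_mul_assoc matrix_mul_assoc)
  also have "\<dots> = (M ** P) *v x" by (simp only: PL matrix_vector_mul_assoc)
  also have "\<dots> = P *v x" by (simp only: MP)
  finally have "P *v x = P *v (L *v (P *v x))" by simp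
  then have "x \<bullet> (P *v x) = (P *v x) \<bullet> (L *v (P *v x))"
    using inner_sym_mat'[OF Psym] by metis
  then show ?thesis using Lpsd by simp
qed

lemma W_ge: "(1/(2*b)) * ((P *v v + b *\<^sub>R x) \<bullet> (P *v v + b *\<^sub>R x)) \<le> Wf P b x v"
  unfolding Wf_def using P_psd[of x] bpos by simp

lemma W_nonneg: "0 \<le> Wf P b x v"
  by (rule order_trans[OF _ W_ge]) (use bpos in simp)

lemma W_deriv: "((\<lambda>t. Wf P b (p t) (q t)) has_vector_derivative - (p t \<bullet> p t)) (at t)"
proof -
  let ?s = "\<lambda>t. P *v q t + b *\<^sub>R p t"
  let ?s' = "P *v (-(L *v p t) - b *\<^sub>R (L *v q t)) + b *\<^sub>R q t"
  have ds: "(?s has_vector_derivative ?s') (at t)"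
    by (intro has_vector_derivative_add vd_mat vd_scale dp dq)
  have s'eq: "?s' = - p t"
    by (simp add: matrix_vector_mult_diff_distrib mv_minus matrix_vector_mult_scaleR
        matrix_vector_mul_assoc PL Mp Mq)
  have d1: "((\<lambda>t. ?s t \<bullet> ?s t) has_vector_derivative (?s t \<bullet> ?s' + ?s' \<bullet> ?s t)) (at t)"
    by (rule vd_inner[OF ds ds])
  have d2: "((\<lambda>t. p t \<bullet> (P *v p t)) has_vector_derivative (p t \<bullet> (P *v q t) + q t \<bullet> (P *v p t))) (at t)"
    by (rule vd_inner[OF dp vd_mat[OF dp]])
  have d: "((\<lambda>t. Wf P b (p t) (q t)) has_vector_derivative
      ((1/(2*b)) * (?s t \<bullet> ?s' + ?s' \<bullet> ?s t) + (1/(2*b)) * (p t \<bullet> (P *v q t) + q t \<bullet> (P *v p t)))) (at t)"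
    unfolding Wf_def by (intro has_vector_derivative_add vd_rscale d1 d2)
  have e1: "q t \<bullet> (P *v p t) = p t \<bullet> (P *v q t)"
    by (rule trans[OF inner_sym_mat'[OF Psym] inner_commute])
  have "(1/(2*b)) * (?s t \<bullet> ?s' + ?s' \<bullet> ?s t) + (1/(2*b)) * (p t \<bullet> (P *v q t) + q t \<bullet> (P *v p t))
      = - (p t \<bullet> p t)"
    unfolding s'eq e1 using bpos
    by (simp add: inner_add_left inner_add_right inner_commute field_simps)
  with d show ?thesis by simp
qed

lemma G_deriv: "((\<lambda>t. Gf L P b \<alpha> (p t) (q t)) has_vector_derivative
     (- \<alpha> * (p t \<bullet> p t) - q t \<bullet> q t + p t \<bullet> (L *v p t))) (at t)"
proof -
  have d1: "((\<lambda>t. p t \<bullet> q t) has_vector_derivative (p t \<bullet> (-(L *v p t) - b *\<^sub>R (L *v q t)) + q t \<bullet> q t)) (at t)"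
    by (rule vd_inner[OF dp dq])
  have d2: "((\<lambda>t. p t \<bullet> (L *v p t)) has_vector_derivative (p t \<bullet> (L *v q t) + q t \<bullet> (L *v p t))) (at t)"
    by (rule vd_inner[OF dp vd_mat[OF dp]])
  have d: "((\<lambda>t. Gf L P b \<alpha> (p t) (q t)) has_vector_derivative
     (\<alpha> * - (p t \<bullet> p t) - (p t \<bullet> (-(L *v p t) - b *\<^sub>R (L *v q t)) + q t \<bullet> q t)
      - (b/2) * (p t \<bullet> (L *v q t) + q t \<bullet> (L *v p t)))) (at t)"
    unfolding Gf_def by (intro has_vector_derivative_diff vd_rscale W_deriv d1 d2)
  have e1: "q t \<bullet> (L *v p t) = p t \<bullet> (L *v q t)"
    by (rule trans[OF inner_sym_mat'[OF Lsym] inner_commute])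
  have "\<alpha> * - (p t \<bullet> p t) - (p t \<bullet> (-(L *v p t) - b *\<^sub>R (L *v q t)) + q t \<bullet> q t)
      - (b/2) * (p t \<bullet> (L *v q t) + q t \<bullet> (L *v p t)) = - \<alpha> * (p t \<bullet> p t) - q t \<bullet> q t + p t \<bullet> (L *v p t)"
    unfolding e1 by (simp add: inner_diff_right inner_minus_right field_simps)
  note eq = this
  show ?thesis using d unfolding eq .
qed

lemma G_nonneg:
  assumes Lam: "\<And>x. x \<bullet> (L *v x) \<le> \<Lambda> * (x \<bullet> x)" and al: "\<Lambda> + 1 \<le> \<alpha>" and Lam0: "0 \<le> \<Lambda>"
  shows "0 \<le> Gf L P b \<alpha> (p t) (q t)"
proof -
  let ?r = "P *v q t" let ?s = "P *v q t + b *\<^sub>R p t"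
  have qr: "q t = L *v ?r" by (simp add: matrix_vector_mul_assoc LP Mq)
  have e1: "?r \<bullet> (L *v p t) = p t \<bullet> (L *v ?r)"
    by (rule trans[OF inner_sym_mat'[OF Lsym] inner_commute])
  have key: "p t \<bullet> q t + (b/2) * (p t \<bullet> (L *v p t)) = (1/(2*b)) * (?s \<bullet> (L *v ?s) - ?r \<bullet> (L *v ?r))"
    apply (subst (1) qr)
    using bpos e1
    by (simp add: matrix_vector_right_distrib matrix_vector_mult_scaleR inner_add_left inner_add_right field_simps)
  have "(1/(2*b)) * (?s \<bullet> (L *v ?s)) \<le> (1/(2*b)) * (\<Lambda> * (?s \<bullet> ?s))"
    using Lam[of ?s] bpos by (intro mult_left_mono) auto
  also have "\<dots> = \<Lambda> * ((1/(2*b)) * (?s \<bullet> ?s))" by simp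
  also have "\<dots> \<le> \<Lambda> * Wf P b (p t) (q t)"
  proof -
    show ?thesis using W_ge Lam0 by (intro mult_left_mono) auto
  qed
  finally have A: "(1/(2*b)) * (?s \<bullet> (L *v ?s)) \<le> \<Lambda> * Wf P b (p t) (q t)" .
  have B: "0 \<le> (1/(2*b)) * (?r \<bullet> (L *v ?r))" using Lpsd bpos by simp
  have C: "\<Lambda> * Wf P b (p t) (q t) \<le> \<alpha> * Wf P b (p t) (q t)"
    using al W_nonneg by (intro mult_right_mono) auto
  show ?thesis unfolding Gf_def using key A B C
    by (simp add: right_diff_distrib)
qed


lemma quad_bound: "\<exists>K>0. \<forall>x. norm ((A::real^'n^'n) *v x) \<le> norm x * K"
  by (rule bounded_linear.pos_bounded[OF matrix_vector_mul_bounded_linear])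

lemma W_upper: "\<exists>C>0. \<forall>x v. Wf P b x v \<le> C * (x \<bullet> x + v \<bullet> v)"
proof -
  obtain K where K: "K > 0" "\<And>x. norm (P *v x) \<le> norm x * K" using quad_bound[of P] by blast
  define C where "C = K^2 / b + b + K / (2*b) + 1"
  have Cpos: "C > 0" unfolding C_def using K bpos by (intro add_pos_pos) auto
  have "Wf P b x v \<le> C * (x \<bullet> x + v \<bullet> v)" for x v
  proof -
    have n1: "norm (P *v v + b *\<^sub>R x) \<le> norm v * K + b * norm x"
      using norm_triangle_ineq[of "P *v v" "b *\<^sub>R x"] K(2)[of v] bpos by simp
    have "(P *v v + b *\<^sub>R x) \<bullet> (P *v v + b *\<^sub>R x) = (norm (P *v v + b *\<^sub>R x))^2"
      by (simp add: dot_square_norm)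
    also have "\<dots> \<le> (norm v * K + b * norm x)^2"
      using n1 by (intro power_mono) auto
    also have "\<dots> \<le> 2 * K^2 * (norm v)^2 + 2 * b^2 * (norm x)^2"
    proof -
      have "0 \<le> (norm v * K - b * norm x)^2" by simp
      then show ?thesis by (simp add: power2_eq_square algebra_simps)
    qed
    finally have A: "(P *v v + b *\<^sub>R x) \<bullet> (P *v v + b *\<^sub>R x) \<le> 2 * K^2 * (norm v)^2 + 2 * b^2 * (norm x)^2" .
    have B: "x \<bullet> (P *v x) \<le> K * (norm x)^2"
    proof -
      have "x \<bullet> (P *v x) \<le> norm x * norm (P *v x)" by (rule norm_cauchy_schwarz)
      also have "\<dots> \<le> norm x * (norm x * K)" by (intro mult_left_mono K(2)) auto
      finally show ?thesis by (simp add: power2_eq_square mult_ac)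
    qed
    have "Wf P b x v \<le> (1/(2*b)) * (2 * K^2 * (norm v)^2 + 2 * b^2 * (norm x)^2) + (1/(2*b)) * (K * (norm x)^2)"
      unfolding Wf_def using A B bpos by (intro add_mono mult_left_mono) auto
    also have "\<dots> = (K^2/b) * (norm v)^2 + (b + K/(2*b)) * (norm x)^2"
      using bpos by (simp add: field_simps power2_eq_square)
    also have "\<dots> \<le> C * (norm v)^2 + C * (norm x)^2"
    proof -
      have k1: "0 \<le> K^2/b" "0 \<le> K/(2*b)" using K bpos by auto
      have c1: "K^2/b \<le> C" "b + K/(2*b) \<le> C" unfolding C_def using k1 bpos by linarith+
      show ?thesis by (intro add_mono mult_right_mono c1) auto
    qed
    also have "\<dots> = C * (x \<bullet> x + v \<bullet> v)" by (simp add: dot_square_norm algebra_simps)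
    finally show ?thesis .
  qed
  with Cpos show ?thesis by blast
qed

lemma W_mono: "s \<le> T \<Longrightarrow> Wf P b (p T) (q T) \<le> Wf P b (p s) (q s)"
  by (rule DERIV_nonpos_imp_nonincreasing[where f = "\<lambda>t. Wf P b (p t) (q t)"])
     (auto simp: has_real_derivative_iff_has_vector_derivative intro!: exI W_deriv)

lemma W_tendsto: "(\<lambda>k. Wf P b (p (real k)) (q (real k))) \<longlonglongrightarrow> 0"
proof -
  obtain K where K: "K > 0" "\<And>x. norm (L *v x) \<le> norm x * K" using quad_bound[of L] by blast
  have Lam: "x \<bullet> (L *v x) \<le> K * (x \<bullet> x)" for x
  proof -
    have "x \<bullet> (L *v x) \<le> norm x * norm (L *v x)" by (rule norm_cauchy_schwarz)
    also have "\<dots> \<le> norm x * (norm x * K)" by (intro mult_left_mono K(2)) auto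
    finally show ?thesis by (simp add: dot_square_norm power2_eq_square mult_ac)
  qed
  obtain C where C: "C > 0" "\<And>x v. Wf P b x v \<le> C * (x \<bullet> x + v \<bullet> v)" using W_upper by blast
  define \<alpha> where "\<alpha> = K + 1"
  let ?W = "\<lambda>t. Wf P b (p t) (q t)"
  let ?G = "\<lambda>t. Gf L P b \<alpha> (p t) (q t)"
  have Gnn: "0 \<le> ?G t" for t
    by (rule G_nonneg[OF Lam]) (use K in \<open>auto simp: \<alpha>_def\<close>)
  have bound: "?W T \<le> C * ?G 0 / T" if T: "T > 0" for T
  proof -
    let ?H = "\<lambda>s. ?G s + s * (?W T / C)"
    have "?H T \<le> ?H 0"
    proof (rule DERIV_nonpos_imp_nonincreasing[where f = ?H])
      show "0 \<le> T" using T by simp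
      fix s assume s: "0 \<le> s" "s \<le> T"
      let ?d = "(- \<alpha> * (p s \<bullet> p s) - q s \<bullet> q s + p s \<bullet> (L *v p s)) + 1 * (?W T / C)"
      have "(?H has_real_derivative ?d) (at s)"
        unfolding has_real_derivative_iff_has_vector_derivative
        by (intro has_vector_derivative_add G_deriv has_vector_derivative_mult_left[OF has_vector_derivative_id])
      moreover have "?d \<le> 0"
      proof -
        have "- \<alpha> * (p s \<bullet> p s) - q s \<bullet> q s + p s \<bullet> (L *v p s) \<le> - (p s \<bullet> p s + q s \<bullet> q s)"
          using Lam[of "p s"] unfolding \<alpha>_def by (simp add: algebra_simps)
        also have "\<dots> \<le> - (?W s / C)"
          using C(2)[of "p s" "q s"] C(1) by (simp add: field_simps)
        also have "\<dots> \<le> - (?W T / C)"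
          using W_mono[OF s(2)] C(1) by (simp add: divide_right_mono)
        finally show ?thesis by simp
      qed
      ultimately show "\<exists>y. (?H has_real_derivative y) (at s) \<and> y \<le> 0" by blast
    qed
    then have "T * (?W T / C) \<le> ?G 0" using Gnn[of T] by simp
    then show ?thesis using T C(1) by (simp add: field_simps)
  qed
  show ?thesis
  proof (rule real_tendsto_sandwich[where f = "\<lambda>_. 0" and h = "\<lambda>k. (C * ?G 0) / real k"])
    show "\<forall>\<^sub>F k in sequentially. 0 \<le> ?W (real k)" by (simp add: W_nonneg)
    show "\<forall>\<^sub>F k in sequentially. ?W (real k) \<le> C * ?G 0 / real k"
      unfolding eventually_sequentially by (intro exI[of _ 1] allI impI bound) simp
    show "(\<lambda>k. 0) \<longlonglongrightarrow> (0::real)" by simp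
    show "(\<lambda>k. C * ?G 0 / real k) \<longlonglongrightarrow> 0" by (rule lim_const_over_n)
  qed
qed

lemma finite_integral: "0 \<le> T \<Longrightarrow> ((\<lambda>t. p t \<bullet> p t) has_integral (Wf P b (p 0) (q 0) - Wf P b (p T) (q T))) {0..T}"
proof -
  assume T: "0 \<le> T"
  have "((\<lambda>t. - (- (p t \<bullet> p t))) has_integral ((- Wf P b (p T) (q T)) - (- Wf P b (p 0) (q 0)))) {0..T}"
    by (rule fundamental_theorem_of_calculus[OF T])
       (rule has_vector_derivative_at_within, rule has_vector_derivative_minus, rule W_deriv)
  then show ?thesis by simp
qed

lemma total_integral: "((\<lambda>t. p t \<bullet> p t) has_integral Wf P b (p 0) (q 0)) {0..}"
proof -
  let ?f = "\<lambda>t. p t \<bullet> p t"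
  let ?W = "\<lambda>t. Wf P b (p t) (q t)"
  let ?g = "\<lambda>k t. if t \<in> {0..real k} then ?f t else 0"
  have gi: "(?g k has_integral (?W 0 - ?W (real k))) {0..}" for k
    using finite_integral[of "real k"] by (subst has_integral_restrict) auto
  have mc: "?f integrable_on {0..} \<and> (\<lambda>k. integral {0..} (?g k)) \<longlonglongrightarrow> integral {0..} ?f"
  proof (rule monotone_convergence_increasing)
    show "?g k integrable_on {0..}" for k using gi by blast
    show "?g k x \<le> ?g (Suc k) x" for k x by auto
    show "(\<lambda>k. ?g k x) \<longlonglongrightarrow> ?f x" if "x \<in> {0..}" for x
    proof (rule tendsto_eventually)
      show "\<forall>\<^sub>F k in sequentially. ?g k x = ?f x"
        unfolding eventually_sequentially
        using that real_nat_ceiling_ge[of x]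
        by (intro exI[of _ "nat \<lceil>x\<rceil>"]) (auto intro: order_trans)
    qed
    show "bounded (range (\<lambda>k. integral {0..} (?g k)))"
      unfolding bounded_iff
    proof (intro exI ballI)
      fix y assume "y \<in> range (\<lambda>k. integral {0..} (?g k))"
      then obtain k where y: "y = ?W 0 - ?W (real k)" using gi integral_unique by blast
      show "norm y \<le> ?W 0" using y W_nonneg[of "p (real k)" "q (real k)"] W_mono[of 0 "real k"] by auto
    qed
  qed
  have "(\<lambda>k. integral {0..} (?g k)) \<longlonglongrightarrow> ?W 0 - 0"
  proof -
    have "integral {0..} (?g k) = ?W 0 - ?W (real k)" for k using gi[of k] by (rule integral_unique)
    then show ?thesis by (simp only:) (intro tendsto_diff tendsto_const W_tendsto)
  qed
  then have "integral {0..} ?f = ?W 0" using mc LIMSEQ_unique by fastforce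
  then show ?thesis using mc integrable_integral by fastforce
qed

end


lemma vec_deriv:
  fixes f :: "real \<Rightarrow> real^'n"
  assumes "\<And>j. ((\<lambda>t. f t $ j) has_real_derivative f' $ j) (at t within S)"
  shows "(f has_vector_derivative f') (at t within S)"
proof -
  have "((\<lambda>t. f t \<bullet> i) has_derivative (\<lambda>x. (x *\<^sub>R f') \<bullet> i)) (at t within S)" if "i \<in> Basis" for i
  proof -
    from that obtain j where i: "i = axis j 1" by (auto simp: Basis_vec_def)
    have e: "(\<lambda>x. x * f' $ j) = (*) (f' $ j)" by (auto simp: fun_eq_iff)
    show ?thesis using assms[of j] unfolding i has_field_derivative_def
      by (simp add: cart_eq_inner_axis[symmetric] e)
  qed
  then show ?thesis unfolding has_vector_derivative_def
    by (subst has_derivative_componentwise_within) auto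
qed

context
  fixes w :: "'n::finite \<Rightarrow> 'n \<Rightarrow> real" and b :: real
  assumes wug: "weighted_undirected_graph w" and conn: "graph_connected w" and bpos: "0 < b"
begin

abbreviation "LL \<equiv> laplacian w"
abbreviation "AA \<equiv> so_A b (laplacian w)"

definition Xk :: "'n \<Rightarrow> real \<Rightarrow> real^'n" where
  "Xk k t = (\<chi> j. mexp (t *\<^sub>R AA) $ Inl j $ Inr k)"
definition Vk :: "'n \<Rightarrow> real \<Rightarrow> real^'n" where
  "Vk k t = (\<chi> j. mexp (t *\<^sub>R AA) $ Inr j $ Inr k)"
definition pk :: "'n \<Rightarrow> real \<Rightarrow> real^'n" where
  "pk k t = centering *v Xk k t"
definition qk :: "'n \<Rightarrow> real \<Rightarrow> real^'n" where
  "qk k t = centering *v Vk k t"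

lemma AE_Inl: "(AA ** Z) $ Inl j $ c = Z $ Inr j $ c"
  by (simp add: matrix_matrix_mult_def sum_UNIV_Plus so_A_def if_distrib if_distribR cong: if_cong)

lemma AE_Inr: "(AA ** Z) $ Inr j $ c = - (LL *v (\<chi> a. Z $ Inl a $ c)) $ j - b * (LL *v (\<chi> a. Z $ Inr a $ c)) $ j"
  by (simp add: matrix_matrix_mult_def sum_UNIV_Plus so_A_def matrix_vector_mult_def sum_negf
      sum_distrib_left mult_ac)

lemma dX: "(Xk k has_vector_derivative Vk k t) (at t)"
  by (rule vec_deriv) (simp add: Xk_def Vk_def AE_Inl[symmetric] mexp_entry_deriv)

lemma dV: "(Vk k has_vector_derivative (- (LL *v Xk k t) - b *\<^sub>R (LL *v Vk k t))) (at t)"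
proof (rule vec_deriv)
  fix j
  show "((\<lambda>t. Vk k t $ j) has_real_derivative (- (LL *v Xk k t) - b *\<^sub>R (LL *v Vk k t)) $ j) (at t)"
    using mexp_entry_deriv[of AA "Inr j" "Inr k" t]
    by (simp add: Xk_def Vk_def AE_Inr)
qed

lemma M_L_v: "centering *v (LL *v x) = LL *v (centering *v x)"
  by (simp add: matrix_vector_mul_assoc M_L[OF wug conn] L_M[OF wug conn])

lemma dp: "(pk k has_vector_derivative qk k t) (at t)"
  unfolding pk_def qk_def by (rule vd_mat[OF dX])

lemma dq: "(qk k has_vector_derivative (- (LL *v pk k t) - b *\<^sub>R (LL *v qk k t))) (at t)"
proof -
  have "(qk k has_vector_derivative centering *v (- (LL *v Xk k t) - b *\<^sub>R (LL *v Vk k t))) (at t)"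
    unfolding qk_def by (rule vd_mat[OF dV])
  also have "centering *v (- (LL *v Xk k t) - b *\<^sub>R (LL *v Vk k t)) = - (LL *v pk k t) - b *\<^sub>R (LL *v qk k t)"
    by (simp add: pk_def qk_def matrix_vector_mult_diff_distrib mv_minus matrix_vector_mult_scaleR M_L_v)
  finally show ?thesis .
qed

lemma Mp: "centering *v pk k t = pk k t"
  by (simp add: pk_def matrix_vector_mul_assoc M_M[OF wug conn])
lemma Mq: "centering *v qk k t = qk k t"
  by (simp add: qk_def matrix_vector_mul_assoc M_M[OF wug conn])

lemma p0: "pk k 0 = 0"
proof -
  have "Xk k 0 = 0" by (simp add: Xk_def vec_eq_iff mexp_zero_entry[of AA, simplified] mat_def)
  then show ?thesis by (simp add: pk_def)
qed

lemma q0: "qk k 0 = centering *v axis k 1"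
proof -
  have "Vk k 0 = axis k 1" by (simp add: Vk_def vec_eq_iff mexp_zero_entry[of AA, simplified] mat_def axis_def)
  then show ?thesis by (simp add: qk_def)
qed

definition Ik :: "'n \<Rightarrow> real" where
  "Ik k = (1 / (2*b)) * (Lp w ** Lp w) $ k $ k"

lemma Ik_eq: "Ik k = (1 / (2 * b)) * (pinv (LL ** LL)) $ k $ k"
  by (simp add: Ik_def pinv_L2[OF wug conn])

lemma pk_integral: "((\<lambda>t. pk k t \<bullet> pk k t) has_integral Ik k) {0..}"
proof -
  have "((\<lambda>t. pk k t \<bullet> pk k t) has_integral Wf (Lp w) b (pk k 0) (qk k 0)) {0..}"
    by (rule total_integral[where L = LL and M = centering])
       (auto simp: L_sym[OF wug] Lp_sym[OF wug conn] L_Lp[OF wug conn] Lp_L[OF wug conn]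
          M_Lp[OF wug conn] L_psd[OF wug] bpos dp dq Mp Mq)
  also have "Wf (Lp w) b (pk k 0) (qk k 0) = Ik k"
  proof -
    have "Lp w *v qk k 0 = Lp w *v axis k 1"
      by (simp add: q0 matrix_vector_mul_assoc Lp_M[OF wug conn])
    moreover have "(Lp w *v axis k 1) \<bullet> (Lp w *v axis k 1) = (Lp w ** Lp w) $ k $ k"
    proof -
      have "(Lp w *v axis k 1) \<bullet> (Lp w *v axis k 1) = (\<Sum>j\<in>UNIV. Lp w $ j $ k * Lp w $ j $ k)"
        by (simp add: inner_vec_def matrix_vector_mult_def axis_def if_distrib cong: if_cong)
      also have "\<dots> = (\<Sum>j\<in>UNIV. Lp w $ k $ j * Lp w $ j $ k)"
        using Lp_sym[OF wug conn] by (metis (no_types, lifting) transpose_def vec_lambda_beta)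
      also have "\<dots> = (Lp w ** Lp w) $ k $ k" by (simp add: matrix_matrix_mult_def)
      finally show ?thesis .
    qed
    ultimately show ?thesis by (simp add: Wf_def p0 Ik_def)
  qed
  finally show ?thesis .
qed

lemma trace_formula:
  "trace (so_C ** mexp (t *\<^sub>R AA) ** so_B s ** transpose (so_C ** mexp (t *\<^sub>R AA) ** so_B s))
   = (\<Sum>k\<in>UNIV. (s $ k)^2 * (pk k t \<bullet> pk k t))"
proof -
  let ?Y = "so_C ** mexp (t *\<^sub>R AA) ** so_B s"
  have CE: "(so_C ** mexp (t *\<^sub>R AA)) $ i $ Inr k = pk k t $ i" for i k
    by (simp add: matrix_matrix_mult_def sum_UNIV_Plus so_C_def pk_def Xk_def matrix_vector_mult_def)
  have Y: "?Y $ i $ k = s $ k * pk k t $ i" for i k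
  proof -
    have "?Y $ i $ k = (\<Sum>c\<in>UNIV. (so_C ** mexp (t *\<^sub>R AA)) $ i $ c * so_B s $ c $ k)"
      by (simp add: matrix_matrix_mult_def)
    also have "\<dots> = (so_C ** mexp (t *\<^sub>R AA)) $ i $ Inr k * s $ k"
      by (simp add: sum_UNIV_Plus so_B_def if_distrib cong: if_cong)
    finally show ?thesis by (simp add: CE)
  qed
  have "trace (?Y ** transpose ?Y) = (\<Sum>i\<in>UNIV. \<Sum>k\<in>UNIV. ?Y $ i $ k * ?Y $ i $ k)"
    by (simp add: trace_def matrix_matrix_mult_def transpose_def)
  also have "\<dots> = (\<Sum>i\<in>UNIV. \<Sum>k\<in>UNIV. (s $ k)^2 * (pk k t $ i * pk k t $ i))"
    by (simp add: Y power2_eq_square mult_ac)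
  also have "\<dots> = (\<Sum>k\<in>UNIV. \<Sum>i\<in>UNIV. (s $ k)^2 * (pk k t $ i * pk k t $ i))"
    by (rule sum.swap)
  also have "\<dots> = (\<Sum>k\<in>UNIV. (s $ k)^2 * (pk k t \<bullet> pk k t))"
    by (simp add: inner_vec_def sum_distrib_left)
  finally show ?thesis .
qed

lemma rho_formula: "rho_ss b LL s = (\<Sum>k\<in>UNIV. (s $ k)^2 * Ik k)"
proof -
  have "((\<lambda>t. \<Sum>k\<in>UNIV. (s $ k)^2 * (pk k t \<bullet> pk k t)) has_integral (\<Sum>k\<in>UNIV. (s $ k)^2 * Ik k)) {0..}"
    by (intro has_integral_sum has_integral_mult_right pk_integral) auto
  then show ?thesis unfolding rho_ss_def trace_formula by (rule integral_unique)
qed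

end

theorem corollary1:
  fixes w :: "'n::finite \<Rightarrow> 'n \<Rightarrow> real" and b :: real and \<sigma> :: "real^'n" and i :: 'n
  assumes "weighted_undirected_graph w"
    and "graph_connected w"
    and "0 < b"
    and "\<forall>j. 0 < \<sigma> $ j"
  shows "((\<lambda>u. rho_ss b (laplacian w) (\<chi> j. if j = i then sqrt u else \<sigma> $ j))
           has_real_derivative
           (1 / (2 * b)) * (pinv (laplacian w ** laplacian w)) $ i $ i) (at ((\<sigma> $ i)\<^sup>2))"
proof -
  note wug = assms(1) and conn = assms(2) and bpos = assms(3)
  have si: "0 < \<sigma> $ i" using assms(4) by blast
  let ?I = "Ik w b"
  define c0 where "c0 = (\<Sum>k\<in>UNIV. if k = i then 0 else (\<sigma> $ k)^2 * ?I k)"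
  have f: "rho_ss b (laplacian w) (\<chi> j. if j = i then sqrt u else \<sigma> $ j) = c0 + u * ?I i"
    if u: "u \<in> {0<..}" for u
  proof -
    have "rho_ss b (laplacian w) (\<chi> j. if j = i then sqrt u else \<sigma> $ j)
        = (\<Sum>k\<in>UNIV. ((\<chi> j. if j = i then sqrt u else \<sigma> $ j) $ k)^2 * ?I k)"
      by (rule rho_formula[OF wug conn bpos])
    also have "\<dots> = (\<Sum>k\<in>UNIV. (if k = i then 0 else (\<sigma> $ k)^2 * ?I k) + (if k = i then u * ?I k else 0))"
      using u by (intro sum.cong refl) auto
    also have "\<dots> = c0 + u * ?I i"
      unfolding c0_def sum.distrib by simp
    finally show ?thesis .
  qed
  have d: "((\<lambda>u. c0 + u * ?I i) has_real_derivative ?I i) (at ((\<sigma> $ i)\<^sup>2))"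
    by (auto intro!: derivative_eq_intros)
  have "((\<lambda>u. rho_ss b (laplacian w) (\<chi> j. if j = i then sqrt u else \<sigma> $ j)) has_real_derivative ?I i) (at ((\<sigma> $ i)\<^sup>2))"
    by (rule has_field_derivative_transform_within_open[OF d, of "{0<..}"])
       (use si in \<open>auto simp: f\<close>)
  moreover have "?I i = (1 / (2 * b)) * (pinv (laplacian w ** laplacian w)) $ i $ i"
    by (rule Ik_eq[OF wug conn bpos])
  ultimately show ?thesis by simp
qed


end
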